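(* Let $k$ be a field, $A=kQ_A/I_A$ an indecomposable radical square zero algebra, and $B$ the algebra obtained from $A$ by gluing a source vertex and a sink vertex of $Q_A$. Then for every $n\ge2$ the map $\psi_n$ restricts to an injective map $\mathrm{Ker}(\delta^n_A)\hookrightarrow\mathrm{Ker}(\delta^n_B)$ which maps $\mathrm{Im}(\delta^{n-1}_A)$ into $\mathrm{Im}(\delta^{n-1}_B)$. In addition, $\dim_k\mathrm{HH}^n(B)-\dim_k\mathrm{HH}^n(A)\ge0$.
   Context: A radical square zero algebra is $kQ/I$ with $Q$ a finite quiver and $I$ generated by all paths of length 2; indecomposable means $Q$ connected. Gluing a source $e_1$ (no incoming arrows) and a sink $e_m$ (no outgoing arrows), both non-isolated: $B$ is the subalgebra generated by $e_1+e_m$, the other vertex idempotents and all arrows; $B\cong kQ_B/I_B$, $Q_B$ obtained by identifying $e_1,e_m$ into one vertex $f_1$, $I_B$ generated by all length-2 paths of $Q_B$. For a path $p=a_r\cdots a_1$ of $Q_A$, $p^*=a_r^*\cdots a_1^*$ is its image in $Q_B$, and vertices map to their images. $Q_n$ denotes the set of paths of length $n$; for path sets $X,Y$, $k(X\|Y)$ is the vector space with basis the pairs $x\|y$, $x\in X$, $y\in Y$, with the same source and same target. Cibils' complex for a radical square zero algebra $kQ/I$: $C^n=k(Q_n\|Q_0)\oplus k(Q_n\|Q_1)$ and $\delta^n:C^n\to C^{n+1}$, $\delta^n(x,y)=(0,D_n(x))$, where $D_n(\gamma\|e)=\sum_{a\in Q_1,\,s(a)=e}a\gamma\|a+(-1)^{n+1}\sum_{b\in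 Q_1,\,t(b)=e}\gamma b\|b$; its cohomology in degree $n\ge1$ is $\mathrm{HH}^n=\mathrm{Ker}\,\delta^n/\mathrm{Im}\,\delta^{n-1}$. $\delta^n_A,\delta^n_B$ denote these for $A,B$. $\psi_n:C^n_A\to C^n_B$ is the linear map $\gamma\|x\mapsto\gamma^*\|x^*$ for $\gamma\in(Q_A)_n$, $x\in(Q_A)_0\cup(Q_A)_1$. *)

theory Defs
  imports Complex_Main "HOL-Library.Function_Algebras"
begin

text \<open>A path of length n (n >= 1) a_n ... a_1 is represented by the list
[a_1, ..., a_n] of its arrows in order of traversal.\<close>

definition quiver :: "'v set \<Rightarrow> 'e set \<Rightarrow> ('e \<Rightarrow> 'v) \<Rightarrow> ('e \<Rightarrow> 'v) \<Rightarrow> bool" where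
  "quiver V E s t \<longleftrightarrow> finite V \<and> finite E \<and> (\<forall>a\<in>E. s a \<in> V \<and> t a \<in> V)"

text \<open>Connected quiver (= the radical square zero algebra kQ/I is indecomposable).\<close>
definition quiver_connected :: "'v set \<Rightarrow> 'e set \<Rightarrow> ('e \<Rightarrow> 'v) \<Rightarrow> ('e \<Rightarrow> 'v) \<Rightarrow> bool" where
  "quiver_connected V E s t \<longleftrightarrow> V \<noteq> {} \<and>
     (\<forall>u\<in>V. \<forall>w\<in>V. (u, w) \<in> (\<Union>a\<in>E. {(s a, t a), (t a, s a)})\<^sup>*)"

definition paths :: "'e set \<Rightarrow> ('e \<Rightarrow> 'v) \<Rightarrow> ('e \<Rightarrow> 'v) \<Rightarrow> nat \<Rightarrow> 'e list set" where
  "paths E s t n = {p. length p = n \<and> set p \<subseteq> E \<and>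
      (\<forall>i. Suc i < n \<longrightarrow> t (p ! i) = s (p ! Suc i))}"

definition psrc :: "('e \<Rightarrow> 'v) \<Rightarrow> 'e list \<Rightarrow> 'v" where "psrc s p = s (hd p)"
definition ptgt :: "('e \<Rightarrow> 'v) \<Rightarrow> 'e list \<Rightarrow> 'v" where "ptgt t p = t (last p)"

text \<open>Basis of C^n = k(Q_n || Q_0) + k(Q_n || Q_1): pairs gamma || x, with x a vertex
(Inl) or an arrow (Inr), parallel to gamma.  (Used for n >= 1.)\<close>
definition cbasis :: "'v set \<Rightarrow> 'e set \<Rightarrow> ('e \<Rightarrow> 'v) \<Rightarrow> ('e \<Rightarrow> 'v) \<Rightarrow> nat
    \<Rightarrow> ('e list \<times> ('v + 'e)) set" where
  "cbasis V E s t n =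
     {(g, Inl e) | g e. g \<in> paths E s t n \<and> e \<in> V \<and> psrc s g = e \<and> ptgt t g = e} \<union>
     {(g, Inr a) | g a. g \<in> paths E s t n \<and> a \<in> E \<and> psrc s g = s a \<and> ptgt t g = t a}"

text \<open>Cochains: k-linear combinations of basis elements, as coefficient functions.\<close>
definition cochains :: "'v set \<Rightarrow> 'e set \<Rightarrow> ('e \<Rightarrow> 'v) \<Rightarrow> ('e \<Rightarrow> 'v) \<Rightarrow> nat
    \<Rightarrow> ('e list \<times> ('v + 'e) \<Rightarrow> 'k::field) set" where
  "cochains V E s t n = {f. \<forall>q. q \<notin> cbasis V E s t n \<longrightarrow> f q = 0}"

definition indic :: "'b \<Rightarrow> 'b \<Rightarrow> 'k::field" where
  "indic b q = (if q = b then 1 else 0)"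

text \<open>Image of a basis element under delta^n: delta(gamma||e) = (0, D_n(gamma||e)),
delta(gamma||a) = 0.\<close>
definition Dbasis :: "'e set \<Rightarrow> ('e \<Rightarrow> 'v) \<Rightarrow> ('e \<Rightarrow> 'v) \<Rightarrow> nat
    \<Rightarrow> 'e list \<times> ('v + 'e) \<Rightarrow> ('e list \<times> ('v + 'e) \<Rightarrow> 'k::field)" where
  "Dbasis E s t n b = (case b of
      (g, Inl e) \<Rightarrow> (\<lambda>q. (\<Sum>a\<in>{a\<in>E. s a = e}. indic (g @ [a], Inr a) q)
                      + (-1) ^ (n + 1) * (\<Sum>c\<in>{c\<in>E. t c = e}. indic (c # g, Inr c) q))
    | (g, Inr a) \<Rightarrow> (\<lambda>q. 0))"

definition delta :: "'v set \<Rightarrow> 'e set \<Rightarrow> ('e \<Rightarrow> 'v) \<Rightarrow> ('e \<Rightarrow> 'v) \<Rightarrow> nat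
    \<Rightarrow> ('e list \<times> ('v + 'e) \<Rightarrow> 'k::field) \<Rightarrow> ('e list \<times> ('v + 'e) \<Rightarrow> 'k)" where
  "delta V E s t n f = (\<lambda>q. \<Sum>b\<in>cbasis V E s t n. f b * Dbasis E s t n b q)"

definition kerD :: "'v set \<Rightarrow> 'e set \<Rightarrow> ('e \<Rightarrow> 'v) \<Rightarrow> ('e \<Rightarrow> 'v) \<Rightarrow> nat
    \<Rightarrow> ('e list \<times> ('v + 'e) \<Rightarrow> 'k::field) set" where
  "kerD V E s t n = {f \<in> cochains V E s t n. delta V E s t n f = 0}"

definition imD :: "'v set \<Rightarrow> 'e set \<Rightarrow> ('e \<Rightarrow> 'v) \<Rightarrow> ('e \<Rightarrow> 'v) \<Rightarrow> nat
    \<Rightarrow> ('e list \<times> ('v + 'e) \<Rightarrow> 'k::field) set" where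
  "imD V E s t n = delta V E s t n ` cochains V E s t n"

definition kdim :: "('x \<Rightarrow> 'k::field) set \<Rightarrow> nat" where
  "kdim S = vector_space.dim (\<lambda>c f x. c * f x) S"

definition dimHH :: "'v set \<Rightarrow> 'e set \<Rightarrow> ('e \<Rightarrow> 'v) \<Rightarrow> ('e \<Rightarrow> 'v) \<Rightarrow> nat \<Rightarrow> 'k::field itself \<Rightarrow> int" where
  "dimHH V E s t n _ = int (kdim (kerD V E s t n :: ('e list \<times> ('v + 'e) \<Rightarrow> 'k) set))
                      - int (kdim (imD V E s t (n - 1) :: ('e list \<times> ('v + 'e) \<Rightarrow> 'k) set))"

text \<open>Gluing the source e1 and the sink em: em is identified with e1 (the glued vertex f_1
is represented by e1); arrows are unchanged (a* = a).\<close>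
definition glue :: "'v \<Rightarrow> 'v \<Rightarrow> 'v \<Rightarrow> 'v" where
  "glue e1 em v = (if v = em then e1 else v)"

definition star_basis :: "'v \<Rightarrow> 'v \<Rightarrow> 'e list \<times> ('v + 'e) \<Rightarrow> 'e list \<times> ('v + 'e)" where
  "star_basis e1 em b = (case b of (g, Inl v) \<Rightarrow> (g, Inl (glue e1 em v)) | (g, Inr a) \<Rightarrow> (g, Inr a))"

definition psi :: "'v set \<Rightarrow> 'e set \<Rightarrow> ('e \<Rightarrow> 'v) \<Rightarrow> ('e \<Rightarrow> 'v) \<Rightarrow> 'v \<Rightarrow> 'v \<Rightarrow> nat
    \<Rightarrow> ('e list \<times> ('v + 'e) \<Rightarrow> 'k::field) \<Rightarrow> ('e list \<times> ('v + 'e) \<Rightarrow> 'k)" where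
  "psi V E s t e1 em n f = (\<lambda>q. \<Sum>b\<in>cbasis V E s t n. f b * indic (star_basis e1 em b) q)"

end

theory Submission
  imports Defs
begin

lemma (in vector_space) dim_ineq_aux:
  assumes sKA: "subspace KA" and sIB: "subspace IB"
  and h1: "IA \<subseteq> KA" "IA \<subseteq> IB" "KA \<subseteq> KB" "IB \<subseteq> KB" "KA \<inter> IB \<subseteq> IA"
  and fF: "finite F" "KB \<subseteq> span F"
  shows "dim KA + dim IB \<le> dim KB + dim IA"
proof -
  obtain P where P: "P \<subseteq> IA" "independent P" "IA \<subseteq> span P" "card P = dim IA"
    by (rule basis_exists)
  have PK: "P \<subseteq> KA" using P(1) h1(1) by (rule order_trans)
  have PI: "P \<subseteq> IB" using P(1) h1(2) by (rule order_trans)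
  obtain Q where Q: "P \<subseteq> Q" "Q \<subseteq> KA" "independent Q" "KA \<subseteq> span Q"
    by (rule maximal_independent_subset_extend[OF PK P(2)])
  obtain R where R: "P \<subseteq> R" "R \<subseteq> IB" "independent R" "IB \<subseteq> span R"
    by (rule maximal_independent_subset_extend[OF PI P(2)])
  have finI: "finite T" if "independent T" "T \<subseteq> KB" for T
  proof -
    have "T \<subseteq> span F" using that(2) fF(2) by (rule order_trans)
    then show ?thesis using independent_span_bound[OF fF(1) that(1)] by simp
  qed
  have fQ: "finite Q" using Q(2) h1(3) by (intro finI[OF Q(3)]) (rule order_trans)
  have fR: "finite R" using R(2) h1(4) by (intro finI[OF R(3)]) (rule order_trans)
  have cQ: "card Q = dim KA" using basis_card_eq_dim[OF Q(2) Q(4) Q(3)] .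
  have cR: "card R = dim IB" using basis_card_eq_dim[OF R(2) R(4) R(3)] .
  have QR: "Q \<inter> R = P"
  proof
    show "P \<subseteq> Q \<inter> R" using Q(1) R(1) by simp
    show "Q \<inter> R \<subseteq> P"
    proof
      fix x assume x: "x \<in> Q \<inter> R"
      show "x \<in> P"
      proof (rule ccontr)
        assume "x \<notin> P"
        then have "P \<subseteq> Q - {x}" using Q(1) by auto
        moreover have "x \<in> span P"
        proof -
          have "x \<in> KA" using x Q(2) by (simp add: subset_iff)
          moreover have "x \<in> IB" using x R(2) by (simp add: subset_iff)
          ultimately have "x \<in> IA" using h1(5) by (simp add: subset_iff)
          then show ?thesis using P(3) by (simp add: subset_iff)
        qed
        ultimately have "x \<in> span (Q - {x})" using span_mono[of P "Q - {x}"] by (simp add: subset_iff)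
        moreover have "x \<in> Q" using x by simp
        ultimately have "\<exists>a\<in>Q. a \<in> span (Q - {a})" by (rule bexI)
        then show False using Q(3) unfolding dependent_def by simp
      qed
    qed
  qed
  have spR: "span R \<subseteq> IB" using span_minimal[OF R(2) sIB] .
  have spQ: "span Q \<subseteq> KA" using span_minimal[OF Q(2) sKA] .
  have ind: "R'' \<subseteq> R - P \<Longrightarrow> independent (Q \<union> R'')" for R''
  proof (induction R'' rule: infinite_finite_induct)
    case (infinite A)
    have "finite (R - P)" using fR by simp
    then have "finite A" using infinite.prems by (rule finite_subset[rotated])
    then show ?case using infinite.hyps by simp
  next
    case empty
    then show ?case using Q(3) by simp
  next
    case (insert r R'')
    have IH: "independent (Q \<union> R'')" using insert.IH insert.prems by simp
    have r: "r \<in> R" "r \<notin> P" "r \<notin> R''" "R'' \<subseteq> R" using insert.prems insert.hyps by auto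
    have "r \<notin> span (Q \<union> R'')"
    proof
      assume "r \<in> span (Q \<union> R'')"
      then obtain q w where qw: "r = q + w" "q \<in> span Q" "w \<in> span R''"
        unfolding span_Un by auto
      have "w \<in> span R" using qw(3) span_mono[OF r(4)] by (simp add: subset_iff)
      moreover have "r \<in> span R" using r(1) by (rule span_base)
      ultimately have "r - w \<in> span R" by (intro span_diff)
      moreover have "r - w = q" using qw(1) by simp
      ultimately have "q \<in> span R" by simp
      then have "q \<in> IB" using spR by (simp add: subset_iff)
      moreover have "q \<in> KA" using qw(2) spQ by (simp add: subset_iff)
      ultimately have "q \<in> IA" using h1(5) by (simp add: subset_iff)
      then have "q \<in> span P" using P(3) by (simp add: subset_iff)
      moreover have "P \<subseteq> R - {r}" using R(1) r(2) by auto
      ultimately have q': "q \<in> span (R - {r})" using span_mono[of P "R - {r}"] by (simp add: subset_iff)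
      have "R'' \<subseteq> R - {r}" using r(3) r(4) by auto
      then have w': "w \<in> span (R - {r})" using span_mono[of R'' "R - {r}"] qw(3) by (simp add: subset_iff)
      have "q + w \<in> span (R - {r})" using q' w' by (rule span_add)
      then have rs: "r \<in> span (R - {r})" using qw(1) by simp
      have "\<exists>a\<in>R. a \<in> span (R - {a})" using rs r(1) by (rule bexI)
      then have "dependent R" unfolding dependent_def .
      then show False using R(3) by simp
    qed
    then have "independent (insert r (Q \<union> R''))" using IH by (rule independent_insertI)
    then show ?case by simp
  qed
  have I: "independent (Q \<union> (R - P))" using ind[of "R - P"] by simp
  have sub: "Q \<union> (R - P) \<subseteq> KB" using Q(2) R(2) h1(3) h1(4) by auto
  obtain Bk where Bk: "Bk \<subseteq> KB" "independent Bk" "KB \<subseteq> span Bk" "card Bk = dim KB"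
    by (rule basis_exists)
  have "finite Bk" using finI[OF Bk(2) Bk(1)] .
  moreover have "Q \<union> (R - P) \<subseteq> span Bk" using sub Bk(3) by (rule order_trans)
  ultimately have "card (Q \<union> (R - P)) \<le> card Bk"
    using independent_span_bound[OF _ I] by simp
  moreover have "card (Q \<union> (R - P)) = card Q + card (R - P)"
    using fQ fR QR by (intro card_Un_disjoint) auto
  moreover have "card (R - P) = card R - card P"
    using fR R(1) by (simp add: card_Diff_subset finite_subset)
  moreover have "card P \<le> card R" using fR R(1) by (rule card_mono)
  ultimately show ?thesis using cQ cR Bk(4) P(4) by linarith
qed

lemma sum_fun_apply': "(\<Sum>b\<in>S. h b) x = (\<Sum>b\<in>S. h b x)"
  by (induction S rule: infinite_finite_induct) auto

interpretation fv: vector_space "\<lambda>c (f::'x \<Rightarrow> 'k::field) x. c * f x"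
  by unfold_locales (auto simp: fun_eq_iff algebra_simps)

lemma kdim_eq: "kdim S = fv.dim S"
  unfolding kdim_def by simp

lemma paths_nonempty: "g \<in> paths E s t m \<Longrightarrow> m \<ge> 1 \<Longrightarrow> g \<noteq> [] \<and> hd g \<in> E \<and> last g \<in> E"
proof -
  assume a: "g \<in> paths E s t m" "m \<ge> 1"
  then have "g \<noteq> []" "set g \<subseteq> E" unfolding paths_def by auto
  then show ?thesis using hd_in_set last_in_set by blast
qed

lemma paths_snoc_D:
  assumes "g @ [a] \<in> paths E s t (Suc m)" "m \<ge> 1"
  shows "g \<in> paths E s t m \<and> t (last g) = s a \<and> a \<in> E"
proof -
  have len: "length g = m" using assms unfolding paths_def by auto
  have g: "g \<in> paths E s t m" using assms len unfolding paths_def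
    by (auto simp: nth_append)
  have "t ((g@[a]) ! (m - 1)) = s ((g@[a]) ! Suc (m - 1))"
    using assms unfolding paths_def by auto
  moreover have "g \<noteq> []" using len assms(2) by auto
  ultimately have "t (last g) = s a" using len assms(2)
    by (auto simp: nth_append last_conv_nth)
  then show ?thesis using g assms unfolding paths_def by auto
qed

lemma paths_cons_D:
  assumes "c # g \<in> paths E s t (Suc m)" "m \<ge> 1"
  shows "g \<in> paths E s t m \<and> t c = s (hd g) \<and> c \<in> E"
proof -
  have len: "length g = m" using assms unfolding paths_def by auto
  have g: "g \<in> paths E s t m" using assms len unfolding paths_def
    by auto
  have all: "\<forall>i. Suc i < Suc m \<longrightarrow> t ((c#g) ! i) = s ((c#g) ! Suc i)"
    using assms(1) unfolding paths_def by blast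
  have "t ((c#g) ! 0) = s ((c#g) ! Suc 0)"
    using spec[OF all, of 0] assms(2) by simp
  then have "t c = s (hd g)" using len assms(2)
    by (cases g) auto
  then show ?thesis using g assms unfolding paths_def by auto
qed

lemma paths_snoc_I:
  assumes "g \<in> paths E s t m" "m \<ge> 1" "a \<in> E" "t (last g) = s a"
  shows "g @ [a] \<in> paths E s t (Suc m)"
proof -
  have len: "length g = m" using assms unfolding paths_def by auto
  show ?thesis unfolding paths_def
  proof (intro CollectI conjI allI impI)
    fix i assume i: "Suc i < Suc m"
    show "t ((g @ [a]) ! i) = s ((g @ [a]) ! Suc i)"
    proof (cases "Suc i < m")
      case True then show ?thesis using assms len unfolding paths_def by (auto simp: nth_append)
    next
      case False then have "Suc i = m" using i by auto
      moreover have "g \<noteq> []" using len assms(2) by auto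
      moreover have "length g - 1 = i" using len \<open>Suc i = m\<close> by simp
      ultimately have "last g = g ! i" by (simp add: last_conv_nth)
      then show ?thesis using assms len \<open>Suc i = m\<close> by (auto simp: nth_append)
    qed
  qed (use assms len in \<open>auto simp: paths_def\<close>)
qed

lemma paths_cons_I:
  assumes "g \<in> paths E s t m" "m \<ge> 1" "c \<in> E" "t c = s (hd g)"
  shows "c # g \<in> paths E s t (Suc m)"
proof -
  have len: "length g = m" using assms unfolding paths_def by auto
  show ?thesis unfolding paths_def
  proof (intro CollectI conjI allI impI)
    fix i assume i: "Suc i < Suc m"
    show "t ((c # g) ! i) = s ((c # g) ! Suc i)"
    proof (cases i)
      case 0 then show ?thesis using assms len by (cases g) auto
    next
      case (Suc j) then show ?thesis using assms len i unfolding paths_def by auto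
    qed
  qed (use assms len in \<open>auto simp: paths_def\<close>)
qed

lemma finite_paths: "finite E \<Longrightarrow> finite (paths E s t n)"
proof -
  assume "finite E"
  then have "finite {p. set p \<subseteq> E \<and> length p = n}" by (rule finite_lists_length_eq)
  then show ?thesis by (rule finite_subset[rotated]) (auto simp: paths_def)
qed

lemma finite_cbasis: "quiver V E s t \<Longrightarrow> finite (cbasis V E s t n)"
proof -
  assume q: "quiver V E s t"
  have "cbasis V E s t n \<subseteq> paths E s t n \<times> (Inl ` V \<union> Inr ` E)"
    unfolding cbasis_def by auto
  moreover have "finite (paths E s t n \<times> (Inl ` V \<union> Inr ` E))"
    using q finite_paths unfolding quiver_def by (intro finite_cartesian_product finite_UnI finite_imageI) auto
  ultimately show ?thesis by (rule finite_subset)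
qed

lemma cbasis_fst: "b \<in> cbasis V E s t n \<Longrightarrow> fst b \<in> paths E s t n"
  unfolding cbasis_def by auto

lemma indic_apply: "indic b q = (if q = b then 1 else 0)"
  by (simp add: indic_def)

lemma Dbasis_Inl: "Dbasis E s t n b (g, Inl v) = 0"
  unfolding Dbasis_def by (auto simp: indic_def split: prod.splits sum.splits)

lemma Dbasis_Inr: "Dbasis E s t n (g, Inr a) = (\<lambda>q. 0)"
  unfolding Dbasis_def by simp

lemma Dbasis_out:
  assumes b: "b \<in> cbasis V E s t n" and n: "n \<ge> 1" and q: "q \<notin> cbasis V E s t (Suc n)"
  shows "Dbasis E s t n b q = (0::'k::field)"
proof (cases b)
  case (Pair g x)
  show ?thesis
  proof (cases x)
    case (Inr a) then show ?thesis using Pair by (simp add: Dbasis_def)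
  next
    case (Inl e)
    have g: "g \<in> paths E s t n" "e \<in> V" "psrc s g = e" "ptgt t g = e"
      using b Pair Inl unfolding cbasis_def by auto
    have ne: "g \<noteq> []" using paths_nonempty[OF g(1) n] by blast
    have 1: "indic (g @ [a], Inr a) q = (0::'k)" if "a \<in> E" "s a = e" for a
    proof -
      have "g @ [a] \<in> paths E s t (Suc n)"
        using paths_snoc_I[OF g(1) n that(1)] g that unfolding ptgt_def by simp
      then have "(g @ [a], Inr a) \<in> cbasis V E s t (Suc n)"
        using g that ne unfolding cbasis_def psrc_def ptgt_def by auto
      then show ?thesis using q by (auto simp: indic_def)
    qed
    have 2: "indic (c # g, Inr c) q = (0::'k)" if "c \<in> E" "t c = e" for c
    proof -
      have "c # g \<in> paths E s t (Suc n)"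
        using paths_cons_I[OF g(1) n that(1)] g that unfolding psrc_def by simp
      then have "(c # g, Inr c) \<in> cbasis V E s t (Suc n)"
        using g that ne unfolding cbasis_def psrc_def ptgt_def by auto
      then show ?thesis using q by (auto simp: indic_def)
    qed
    show ?thesis using Pair Inl 1 2 unfolding Dbasis_def by simp
  qed
qed

lemma delta_cochain:
  assumes "quiver V E s t" "n \<ge> 1"
  shows "delta V E s t n f \<in> cochains V E s t (Suc n)"
  unfolding cochains_def delta_def
proof (intro CollectI allI impI)
  fix q assume q: "q \<notin> cbasis V E s t (Suc n)"
  show "(\<Sum>b\<in>cbasis V E s t n. f b * Dbasis E s t n b q) = 0"
    by (rule sum.neutral) (use Dbasis_out[OF _ assms(2) q] in auto)
qed

lemma delta_cochain2:
  assumes "quiver V E s t" "n \<ge> 2"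
  shows "delta V E s t (n - 1) f \<in> cochains V E s t n"
proof -
  have "Suc (n - 1) = n" using assms(2) by simp
  then show ?thesis using delta_cochain[OF assms(1), of "n - 1" f] assms(2) by simp
qed

lemma Dbasis_zero:
  assumes "\<And>a. a \<in> E \<Longrightarrow> s a = e \<Longrightarrow> indic (g @ [a], Inr a) q = (0::'k::field)"
    and "\<And>c. c \<in> E \<Longrightarrow> t c = e \<Longrightarrow> indic (c # g, Inr c) q = (0::'k)"
  shows "Dbasis E s t n (g, Inl e) q = (0::'k)"
proof -
  have z1: "(\<Sum>a\<in>{a\<in>E. s a = e}. indic (g @ [a], Inr a) q) = (0::'k)"
    by (rule sum.neutral) (use assms(1) in auto)
  have z2: "(\<Sum>c\<in>{c\<in>E. t c = e}. indic (c # g, Inr c) q) = (0::'k)"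
    by (rule sum.neutral) (use assms(2) in auto)
  show ?thesis unfolding Dbasis_def using z1 z2 by simp
qed

lemma delta_Inl: "delta V E s t n f (g, Inl v) = 0"
  unfolding delta_def by (simp add: Dbasis_Inl)

lemma delta_kill:
  assumes "\<And>g v. h (g, Inl v) = 0"
  shows "delta V E s t n h = 0"
proof
  fix q
  have "h b * Dbasis E s t n b q = 0" for b
    using assms by (cases b; case_tac "snd b") (auto simp: Dbasis_Inr)
  then show "delta V E s t n h q = 0 q" unfolding delta_def by (simp add: sum.neutral)
qed

lemma delta_add: "delta V E s t n (f + g) = delta V E s t n f + delta V E s t n g"
  unfolding delta_def by (auto simp: fun_eq_iff algebra_simps sum.distrib)

lemma delta_scale: "delta V E s t n (\<lambda>x. c * f x) = (\<lambda>x. c * delta V E s t n f x)"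
  unfolding delta_def by (auto simp: fun_eq_iff algebra_simps sum_distrib_left)

lemma delta_zero: "delta V E s t n 0 = 0"
  unfolding delta_def by (auto simp: fun_eq_iff)

lemma subspace_cochains: "fv.subspace (cochains V E s t n)"
  unfolding fv.subspace_def cochains_def by auto

lemma subspace_kerD: "fv.subspace (kerD V E s t n)"
  unfolding fv.subspace_def kerD_def cochains_def
  by (auto simp: delta_add delta_zero delta_scale fun_eq_iff)

lemma subspace_imD: "fv.subspace (imD V E s t n :: (_ \<Rightarrow> 'k::field) set)"
  unfolding fv.subspace_def imD_def
proof (intro conjI ballI allI)
  have "(0::_ \<Rightarrow> 'k) = delta V E s t n 0" by (simp add: delta_zero)
  moreover have "(0::_ \<Rightarrow> 'k) \<in> cochains V E s t n" by (simp add: cochains_def)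
  ultimately show "(0::_ \<Rightarrow> 'k) \<in> delta V E s t n ` cochains V E s t n" by (rule image_eqI)
next
  fix x y :: "_ \<Rightarrow> 'k" assume "x \<in> delta V E s t n ` cochains V E s t n" "y \<in> delta V E s t n ` cochains V E s t n"
  then obtain f g where fg: "f \<in> cochains V E s t n" "g \<in> cochains V E s t n" "x = delta V E s t n f" "y = delta V E s t n g" by blast
  have "x + y = delta V E s t n (f + g)" using fg by (simp add: delta_add)
  moreover have "f + g \<in> cochains V E s t n" using fg by (simp add: cochains_def)
  ultimately show "x + y \<in> delta V E s t n ` cochains V E s t n" by (rule image_eqI)
next
  fix c and x :: "_ \<Rightarrow> 'k" assume "x \<in> delta V E s t n ` cochains V E s t n"
  then obtain f where f: "f \<in> cochains V E s t n" "x = delta V E s t n f" by blast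
  have "(\<lambda>xa. c * x xa) = delta V E s t n (\<lambda>xa. c * f xa)" using f by (simp add: delta_scale)
  moreover have "(\<lambda>xa. c * f xa) \<in> cochains V E s t n" using f by (simp add: cochains_def)
  ultimately show "(\<lambda>xa. c * x xa) \<in> delta V E s t n ` cochains V E s t n" by (rule image_eqI)
qed

lemma cochains_span:
  assumes "quiver V E s t"
  shows "cochains V E s t n \<subseteq> fv.span (indic ` cbasis V E s t n)"
proof
  fix f :: "_ \<Rightarrow> 'k::field" assume f: "f \<in> cochains V E s t n"
  have fin: "finite (cbasis V E s t n)" using finite_cbasis[OF assms] .
  have "f = (\<Sum>b\<in>cbasis V E s t n. (\<lambda>x. f b * indic b x))"
  proof
    fix q
    have "(\<Sum>b\<in>cbasis V E s t n. (\<lambda>x. f b * indic b x)) q = (\<Sum>b\<in>cbasis V E s t n. f b * indic b q)"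
      by (simp add: sum_fun_apply')
    also have "\<dots> = (\<Sum>b\<in>cbasis V E s t n. if b = q then f b else 0)"
      by (rule sum.cong) (auto simp: indic_def)
    also have "\<dots> = f q" using fin f unfolding cochains_def by (cases q) auto
    finally show "f q = (\<Sum>b\<in>cbasis V E s t n. (\<lambda>x. f b * indic b x)) q" by simp
  qed
  also have "\<dots> \<in> fv.span (indic ` cbasis V E s t n)"
    by (intro fv.span_sum fv.span_scale fv.span_base) auto
  finally show "f \<in> fv.span (indic ` cbasis V E s t n)" .
qed

lemma imD_sub_kerD:
  assumes "quiver V E s t" "n \<ge> 2"
  shows "imD V E s t (n - 1) \<subseteq> kerD V E s t n"
proof
  fix x assume "x \<in> imD V E s t (n - 1)"
  then obtain f where x: "x = delta V E s t (n - 1) f" unfolding imD_def by blast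
  have "x \<in> cochains V E s t n" using delta_cochain[OF assms(1), of "n - 1" f] assms x by simp
  moreover have "delta V E s t n x = 0" using delta_kill[of x] x delta_Inl by metis
  ultimately show "x \<in> kerD V E s t n" unfolding kerD_def by simp
qed

locale gluing =
  fixes V :: "'v set" and E :: "'e set" and s t :: "'e \<Rightarrow> 'v" and e1 em :: 'v
  assumes q: "quiver V E s t" and e1V: "e1 \<in> V" and noin: "\<forall>a\<in>E. t a \<noteq> e1"
    and out1: "\<exists>a\<in>E. s a = e1" and emV: "em \<in> V" and noout: "\<forall>a\<in>E. s a \<noteq> em"
begin

abbreviation "gl \<equiv> glue e1 em"
abbreviation "VBg \<equiv> gl ` V"
abbreviation "sBg \<equiv> gl \<circ> s"
abbreviation "tBg \<equiv> gl \<circ> t"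

lemma qA: "quiver V E s t" by (rule q)

lemma e1_ne_em: "e1 \<noteq> em" using out1 noout by blast

lemma qV: "a \<in> E \<Longrightarrow> s a \<in> V \<and> t a \<in> V" using q unfolding quiver_def by blast

lemma quiverB: "quiver VBg E sBg tBg"
  using q unfolding quiver_def glue_def by auto

lemma paths_AB: "paths E s t n \<subseteq> paths E sBg tBg n"
  unfolding paths_def by auto

lemma gl_fix: "v \<noteq> em \<Longrightarrow> gl v = v" unfolding glue_def by simp

lemma gl_eq_iff: "e \<noteq> e1 \<Longrightarrow> e \<noteq> em \<Longrightarrow> (gl v = e) \<longleftrightarrow> v = e"
  unfolding glue_def by auto

lemma cbasis_A:
  assumes b: "b \<in> cbasis V E s t n" and n: "n \<ge> 1"
  shows "b \<in> cbasis VBg E sBg tBg n \<and> star_basis e1 em b = b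
         \<and> Dbasis E sBg tBg n b = (Dbasis E s t n b :: _ \<Rightarrow> 'k::field)"
proof (cases b)
  case (Pair g x)
  have gp: "g \<in> paths E s t n" using b Pair unfolding cbasis_def by auto
  then have gpB: "g \<in> paths E sBg tBg n" using paths_AB by blast
  have ne: "g \<noteq> []" "hd g \<in> E" "last g \<in> E" using paths_nonempty[OF gp n] by auto
  show ?thesis
  proof (cases x)
    case (Inr a)
    have "a \<in> E" "s (hd g) = s a" "t (last g) = t a"
      using b Pair Inr unfolding cbasis_def psrc_def ptgt_def by auto
    then have "b \<in> cbasis VBg E sBg tBg n"
      using gpB Pair Inr unfolding cbasis_def psrc_def ptgt_def by auto
    then show ?thesis using Pair Inr by (simp add: star_basis_def Dbasis_Inr)
  next
    case (Inl e)
    have h: "e \<in> V" "s (hd g) = e" "t (last g) = e"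
      using b Pair Inl unfolding cbasis_def psrc_def ptgt_def by auto
    have e: "e \<noteq> em" "e \<noteq> e1" using h ne noout noin by auto
    have eVB: "e \<in> VBg" using h(1) gl_fix[OF e(1)] by (metis image_eqI)
    have "b \<in> cbasis VBg E sBg tBg n"
      using gpB Pair Inl h e eVB unfolding cbasis_def psrc_def ptgt_def by (auto simp: gl_fix)
    moreover have "star_basis e1 em b = b" using Pair Inl e by (simp add: star_basis_def gl_fix)
    moreover have "{a \<in> E. sBg a = e} = {a \<in> E. s a = e}" "{a \<in> E. tBg a = e} = {a \<in> E. t a = e}"
      using gl_eq_iff[OF e(2) e(1)] by auto
    then have "Dbasis E sBg tBg n b = (Dbasis E s t n b :: _ \<Rightarrow> 'k::field)"
      using Pair Inl unfolding Dbasis_def by simp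
    ultimately show ?thesis by blast
  qed
qed

lemma cochains_AB: "n \<ge> 1 \<Longrightarrow> cochains V E s t n \<subseteq> cochains VBg E sBg tBg n"
  unfolding cochains_def using cbasis_A by blast

lemma delta_AB:
  assumes f: "f \<in> cochains V E s t n" and n: "n \<ge> 1"
  shows "delta VBg E sBg tBg n f = delta V E s t n f"
proof
  fix q
  have sub: "cbasis V E s t n \<subseteq> cbasis VBg E sBg tBg n" using cbasis_A n by blast
  have "delta VBg E sBg tBg n f q = (\<Sum>b\<in>cbasis V E s t n. f b * Dbasis E sBg tBg n b q)"
    unfolding delta_def
    by (rule sum.mono_neutral_right) (use finite_cbasis[OF quiverB] sub f in \<open>auto simp: cochains_def\<close>)
  also have "\<dots> = delta V E s t n f q"
    unfolding delta_def
  proof (rule sum.cong)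
    fix b assume "b \<in> cbasis V E s t n"
    then have "Dbasis E sBg tBg n b = (Dbasis E s t n b :: _ \<Rightarrow> 'a)" using cbasis_A[OF _ n] by blast
    then show "f b * Dbasis E sBg tBg n b q = f b * Dbasis E s t n b q" by simp
  qed simp
  finally show "delta VBg E sBg tBg n f q = delta V E s t n f q" .
qed

lemma psi_id:
  assumes f: "f \<in> cochains V E s t n" and n: "n \<ge> 1"
  shows "psi V E s t e1 em n f = f"
proof
  fix q
  have "psi V E s t e1 em n f q = (\<Sum>b\<in>cbasis V E s t n. if b = q then f b else 0)"
    unfolding psi_def
  proof (rule sum.cong)
    fix b assume "b \<in> cbasis V E s t n"
    then have "star_basis e1 em b = b" using cbasis_A[OF _ n] by blast
    then show "f b * indic (star_basis e1 em b) q = (if b = q then f b else 0)"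
      by (simp add: indic_def)
  qed simp
  also have "\<dots> = f q" using finite_cbasis[OF q] f unfolding cochains_def by (cases q) auto
  finally show "psi V E s t e1 em n f q = f q" .
qed

lemma key:
  assumes m: "m \<ge> 1" and bB: "b \<in> cbasis VBg E sBg tBg m" and bA: "b \<notin> cbasis V E s t m"
    and qp: "fst q \<in> paths E s t (Suc m)"
  shows "Dbasis E sBg tBg m b q = (0::'k::field)"
proof (cases b)
  case (Pair g x)
  show ?thesis
  proof (cases x)
    case (Inr a) then show ?thesis using Pair by (simp add: Dbasis_Inr)
  next
    case (Inl e)
    have gB: "g \<in> paths E sBg tBg m" "gl (s (hd g)) = e" "gl (t (last g)) = e"
      using bB Pair Inl unfolding cbasis_def psrc_def ptgt_def by auto
    have ne: "g \<noteq> []" "hd g \<in> E" "last g \<in> E" using paths_nonempty[OF gB(1) m] by auto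
    have notA: "\<not> (g \<in> paths E s t m \<and> e \<in> V \<and> s (hd g) = e \<and> t (last g) = e)"
      using bA Pair Inl unfolding cbasis_def psrc_def ptgt_def by auto
    have 1: "indic (g @ [a], Inr a) q = (0::'k)" if a: "a \<in> E" "gl (s a) = e" for a
    proof -
      have "g @ [a] \<notin> paths E s t (Suc m)"
      proof
        assume "g @ [a] \<in> paths E s t (Suc m)"
        from paths_snoc_D[OF this m] have gA: "g \<in> paths E s t m" "t (last g) = s a" by auto
        have h1: "s (hd g) \<noteq> em" using noout ne(2) by blast
        have "s (hd g) = e" using gB(2) gl_fix[OF h1] by simp
        moreover have h2: "s a \<noteq> em" using noout a(1) by blast
        have "s a = e" using a(2) gl_fix[OF h2] by simp
        moreover have "e \<in> V" using qV[OF a(1)] \<open>s a = e\<close> by simp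
        ultimately show False using notA gA by auto
      qed
      then have "q \<noteq> (g @ [a], Inr a)" using qp by auto
      then show ?thesis by (simp add: indic_def)
    qed
    have 2: "indic (c # g, Inr c) q = (0::'k)" if c: "c \<in> E" "gl (t c) = e" for c
    proof -
      have "c # g \<notin> paths E s t (Suc m)"
      proof
        assume "c # g \<in> paths E s t (Suc m)"
        from paths_cons_D[OF this m] have gA: "g \<in> paths E s t m" "t c = s (hd g)" by auto
        have tc: "t c \<noteq> em" using gA noout ne by auto
        then have "t c = e" using c(2) gl_fix[OF tc] by simp
        moreover have "s (hd g) = e" using gA \<open>t c = e\<close> by simp
        moreover have "t (last g) = e"
        proof (cases "t (last g) = em")
          case True
          then have "e = e1" using gB(3) unfolding glue_def by simp
          then show ?thesis using \<open>t c = e\<close> noin c by blast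
        next
          case False then show ?thesis using gB(3) gl_fix[OF False] by simp
        qed
        moreover have "e \<in> V" using qV[OF c(1)] \<open>t c = e\<close> by simp
        ultimately show False using notA gA by auto
      qed
      then have "q \<noteq> (c # g, Inr c)" using qp by auto
      then show ?thesis by (simp add: indic_def)
    qed
    show ?thesis unfolding Pair Inl
    proof (rule Dbasis_zero)
      fix a assume "a \<in> E" "sBg a = e"
      then show "indic (g @ [a], Inr a) q = (0::'k)" using 1 by simp
    next
      fix c assume "c \<in> E" "tBg c = e"
      then show "indic (c # g, Inr c) q = (0::'k)" using 2 by simp
    qed
  qed
qed

lemma inter_sub:
  assumes n: "n \<ge> 2"
  shows "kerD V E s t n \<inter> imD VBg E sBg tBg (n - 1) \<subseteq> (imD V E s t (n - 1) :: (_ \<Rightarrow> 'k::field) set)"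
proof
  fix x :: "_ \<Rightarrow> 'k" assume x: "x \<in> kerD V E s t n \<inter> imD VBg E sBg tBg (n - 1)"
  then obtain y where y: "y \<in> cochains VBg E sBg tBg (n - 1)" "x = delta VBg E sBg tBg (n - 1) y"
    unfolding imD_def by blast
  have xc: "x \<in> cochains V E s t n" using x unfolding kerD_def by blast
  define yA where "yA = (\<lambda>q. if q \<in> cbasis V E s t (n - 1) then y q else 0)"
  have yA: "yA \<in> cochains V E s t (n - 1)" unfolding yA_def cochains_def by auto
  have m: "n - 1 \<ge> 1" "Suc (n - 1) = n" using n by auto
  have sub: "cbasis V E s t (n - 1) \<subseteq> cbasis VBg E sBg tBg (n - 1)" using cbasis_A m by blast
  have "x = delta V E s t (n - 1) yA"
  proof
    fix q
    show "x q = delta V E s t (n - 1) yA q"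
    proof (cases "fst q \<in> paths E s t n")
      case True
      have qq: "fst q \<in> paths E s t (Suc (n - 1))" using True m(2) by simp
      have kq: "\<And>b. b \<in> cbasis VBg E sBg tBg (n - 1) - cbasis V E s t (n - 1) \<Longrightarrow> Dbasis E sBg tBg (n - 1) b q = (0::'k)"
        using key[OF m(1) _ _ qq] by blast
      have "x q = (\<Sum>b\<in>cbasis VBg E sBg tBg (n - 1). y b * Dbasis E sBg tBg (n - 1) b q)"
        using y unfolding delta_def by simp
      also have "\<dots> = (\<Sum>b\<in>cbasis V E s t (n - 1). y b * Dbasis E sBg tBg (n - 1) b q)"
        by (rule sum.mono_neutral_right)
           (use finite_cbasis[OF quiverB] sub kq in auto)
      also have "\<dots> = delta V E s t (n - 1) yA q"
        unfolding delta_def yA_def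
      proof (rule sum.cong)
        fix b assume b: "b \<in> cbasis V E s t (n - 1)"
        then have "Dbasis E sBg tBg (n - 1) b = (Dbasis E s t (n - 1) b :: _ \<Rightarrow> 'k)" using cbasis_A[OF _ m(1)] by blast
        then show "y b * Dbasis E sBg tBg (n - 1) b q = (if b \<in> cbasis V E s t (n - 1) then y b else 0) * Dbasis E s t (n - 1) b q"
          using b by simp
      qed simp
      finally show ?thesis .
    next
      case False
      then have qn: "q \<notin> cbasis V E s t n" using cbasis_fst by blast
      have dc: "delta V E s t (n - 1) yA \<in> cochains V E s t n"
        using delta_cochain2[OF qA n] by this
      have "x q = 0" using xc qn unfolding cochains_def by blast
      moreover have "delta V E s t (n - 1) yA q = 0" using dc qn unfolding cochains_def by blast
      ultimately show ?thesis by simp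
    qed
  qed
  then show "x \<in> imD V E s t (n - 1)" unfolding imD_def using yA by (rule image_eqI)
qed

lemma main:
  assumes n2: "n \<ge> 2"
  shows "(\<forall>f \<in> (kerD V E s t n :: ('e list \<times> ('v + 'e) \<Rightarrow> 'k::field) set).
            psi V E s t e1 em n f \<in> kerD VBg E sBg tBg n)
       \<and> inj_on (psi V E s t e1 em n) (kerD V E s t n :: ('e list \<times> ('v + 'e) \<Rightarrow> 'k) set)
       \<and> psi V E s t e1 em n ` (imD V E s t (n - 1) :: ('e list \<times> ('v + 'e) \<Rightarrow> 'k) set)
            \<subseteq> imD VBg E sBg tBg (n - 1)
       \<and> dimHH VBg E sBg tBg n (TYPE('k)) - dimHH V E s t n (TYPE('k)) \<ge> 0"
proof -
  have n1: "n \<ge> 1" "n - 1 \<ge> 1" using n2 by auto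
  have psiK: "psi V E s t e1 em n f = f" if "f \<in> (kerD V E s t n :: (_ \<Rightarrow> 'k) set)" for f
    using that psi_id[OF _ n1(1)] unfolding kerD_def by blast
  have KK: "(kerD V E s t n :: (_ \<Rightarrow> 'k) set) \<subseteq> kerD VBg E sBg tBg n"
  proof
    fix f :: "_ \<Rightarrow> 'k" assume f: "f \<in> kerD V E s t n"
    then have fc: "f \<in> cochains V E s t n" and d: "delta V E s t n f = 0" unfolding kerD_def by auto
    have "f \<in> cochains VBg E sBg tBg n" using cochains_AB[OF n1(1)] fc by blast
    moreover have "delta VBg E sBg tBg n f = 0" using delta_AB[OF fc n1(1)] d by simp
    ultimately show "f \<in> kerD VBg E sBg tBg n" unfolding kerD_def by simp
  qed
  have II: "(imD V E s t (n - 1) :: (_ \<Rightarrow> 'k) set) \<subseteq> imD VBg E sBg tBg (n - 1)"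
  proof
    fix x :: "_ \<Rightarrow> 'k" assume "x \<in> imD V E s t (n - 1)"
    then obtain y where y: "y \<in> cochains V E s t (n - 1)" "x = delta V E s t (n - 1) y"
      unfolding imD_def by blast
    have "y \<in> cochains VBg E sBg tBg (n - 1)" using cochains_AB[OF n1(2)] y(1) by blast
    moreover have "x = delta VBg E sBg tBg (n - 1) y" using delta_AB[OF y(1) n1(2)] y(2) by simp
    ultimately show "x \<in> imD VBg E sBg tBg (n - 1)" unfolding imD_def by simp
  qed
  have psiI: "psi V E s t e1 em n x = x" if "x \<in> (imD V E s t (n - 1) :: (_ \<Rightarrow> 'k) set)" for x
    using that imD_sub_kerD[OF qA n2] psiK by blast
  have P1: "\<forall>f \<in> (kerD V E s t n :: (_ \<Rightarrow> 'k) set). psi V E s t e1 em n f \<in> kerD VBg E sBg tBg n"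
    using KK psiK by auto
  have P2: "inj_on (psi V E s t e1 em n) (kerD V E s t n :: (_ \<Rightarrow> 'k) set)"
    by (rule inj_onI) (simp add: psiK)
  have P3: "psi V E s t e1 em n ` (imD V E s t (n - 1) :: (_ \<Rightarrow> 'k) set) \<subseteq> imD VBg E sBg tBg (n - 1)"
    using II psiI by auto
  have "fv.dim (kerD V E s t n :: (_ \<Rightarrow> 'k) set) + fv.dim (imD VBg E sBg tBg (n - 1) :: (_ \<Rightarrow> 'k) set)
      \<le> fv.dim (kerD VBg E sBg tBg n :: (_ \<Rightarrow> 'k) set) + fv.dim (imD V E s t (n - 1) :: (_ \<Rightarrow> 'k) set)"
  proof (rule fv.dim_ineq_aux)
    show "fv.subspace (kerD V E s t n :: (_ \<Rightarrow> 'k) set)" by (rule subspace_kerD)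
    show "fv.subspace (imD VBg E sBg tBg (n - 1) :: (_ \<Rightarrow> 'k) set)" by (rule subspace_imD)
    show "(imD V E s t (n - 1) :: (_ \<Rightarrow> 'k) set) \<subseteq> kerD V E s t n" by (rule imD_sub_kerD[OF qA n2])
    show "(imD V E s t (n - 1) :: (_ \<Rightarrow> 'k) set) \<subseteq> imD VBg E sBg tBg (n - 1)" by (rule II)
    show "(kerD V E s t n :: (_ \<Rightarrow> 'k) set) \<subseteq> kerD VBg E sBg tBg n" by (rule KK)
    show "(imD VBg E sBg tBg (n - 1) :: (_ \<Rightarrow> 'k) set) \<subseteq> kerD VBg E sBg tBg n" by (rule imD_sub_kerD[OF quiverB n2])
    show "(kerD V E s t n :: (_ \<Rightarrow> 'k) set) \<inter> imD VBg E sBg tBg (n - 1) \<subseteq> imD V E s t (n - 1)" by (rule inter_sub[OF n2])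
    show "finite (indic ` cbasis VBg E sBg tBg n :: (_ \<Rightarrow> 'k) set)" using finite_cbasis[OF quiverB] by simp
    have "(kerD VBg E sBg tBg n :: (_ \<Rightarrow> 'k) set) \<subseteq> cochains VBg E sBg tBg n" unfolding kerD_def by blast
    then show "(kerD VBg E sBg tBg n :: (_ \<Rightarrow> 'k) set) \<subseteq> fv.span (indic ` cbasis VBg E sBg tBg n)"
      using cochains_span[OF quiverB] by (rule order_trans)
  qed
  then have P4: "dimHH VBg E sBg tBg n (TYPE('k)) - dimHH V E s t n (TYPE('k)) \<ge> 0"
    unfolding dimHH_def kdim_eq by linarith
  show ?thesis using P1 P2 P3 P4 by blast
qed

end

theorem proposition6p11:
  fixes V :: "'v set" and E :: "'e set" and s t :: "'e \<Rightarrow> 'v" and e1 em :: 'v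
    and n :: nat and K :: "'k::field itself"
  assumes "quiver V E s t"
    and "quiver_connected V E s t"
    and "e1 \<in> V" and "\<forall>a\<in>E. t a \<noteq> e1" and "\<exists>a\<in>E. s a = e1"
    and "em \<in> V" and "\<forall>a\<in>E. s a \<noteq> em" and "\<exists>a\<in>E. t a = em"
    and "n \<ge> 2"
  defines "VB \<equiv> glue e1 em ` V" and "sB \<equiv> glue e1 em \<circ> s" and "tB \<equiv> glue e1 em \<circ> t"
  shows "(\<forall>f \<in> (kerD V E s t n :: ('e list \<times> ('v + 'e) \<Rightarrow> 'k) set).
            psi V E s t e1 em n f \<in> kerD VB E sB tB n)
       \<and> inj_on (psi V E s t e1 em n) (kerD V E s t n :: ('e list \<times> ('v + 'e) \<Rightarrow> 'k) set)
       \<and> psi V E s t e1 em n ` (imD V E s t (n - 1) :: ('e list \<times> ('v + 'e) \<Rightarrow> 'k) set)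
            \<subseteq> imD VB E sB tB (n - 1)
       \<and> dimHH VB E sB tB n K - dimHH V E s t n K \<ge> 0"
proof -
  interpret gluing V E s t e1 em
    using assms(1,3-7) by unfold_locales auto
  have K: "dimHH V' E s' t' n K = dimHH V' E s' t' n TYPE('k)" for V' :: "'v set" and s' t' :: "'e \<Rightarrow> 'v"
    unfolding dimHH_def by simp
  show ?thesis unfolding VB_def sB_def tB_def K by (rule main[OF assms(9)])
qed

end
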